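(* For any positive integer $n$ there exists an $n$-vertex graph which is $(2^{r+8}\log n,\, r)$-locally Ramsey for all $r$.
   Context: All logarithms are base $2$. For a graph $G$ and reals $m,r>0$ (not necessarily integers), $G$ is called $(m,r)$-locally Ramsey if every set of at least $m$ vertices of $G$ contains both a clique and an independent set of size at least $r$. *)

theory Defs
  imports Complex_Main
begin

definition simple_graph :: "'a set \<Rightarrow> ('a \<Rightarrow> 'a \<Rightarrow> bool) \<Rightarrow> bool" where
  "simple_graph V E \<longleftrightarrow> finite V \<and>
     (\<forall>u\<in>V. \<forall>v\<in>V. E u v \<longrightarrow> E v u) \<and> (\<forall>v\<in>V. \<not> E v v)"

definition is_clique :: "('a \<Rightarrow> 'a \<Rightarrow> bool) \<Rightarrow> 'a set \<Rightarrow> bool" where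
  "is_clique E K \<longleftrightarrow> (\<forall>u\<in>K. \<forall>v\<in>K. u \<noteq> v \<longrightarrow> E u v)"

definition is_indep :: "('a \<Rightarrow> 'a \<Rightarrow> bool) \<Rightarrow> 'a set \<Rightarrow> bool" where
  "is_indep E I \<longleftrightarrow> (\<forall>u\<in>I. \<forall>v\<in>I. \<not> E u v)"

definition locally_ramsey :: "'a set \<Rightarrow> ('a \<Rightarrow> 'a \<Rightarrow> bool) \<Rightarrow> real \<Rightarrow> real \<Rightarrow> bool" where
  "locally_ramsey V E m r \<longleftrightarrow>
     (\<forall>S\<subseteq>V. real (card S) \<ge> m \<longrightarrow>
        (\<exists>K\<subseteq>S. is_clique E K \<and> real (card K) \<ge> r) \<and>
        (\<exists>I\<subseteq>S. is_indep E I \<and> real (card I) \<ge> r))"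

end

theory Submission
  imports Defs "HOL-Probability.Probability"
begin


fun fs :: "nat \<Rightarrow> real" where
  "fs 0 = 1"
| "fs (Suc j) = sqrt 2 * (fs j + 2)"

lemma fs_ge1: "fs j \<ge> 1"
proof (induction j)
  case (Suc j)
  have "sqrt 2 \<ge> 1" by simp
  moreover have "fs j + 2 \<ge> 1" using Suc by simp
  ultimately have "sqrt 2 * (fs j + 2) \<ge> 1 * 1" by (intro mult_mono) auto
  then show ?case by simp
qed simp

lemma fs_bound: "fs j + 7 \<le> 8 * sqrt 2 ^ j"
proof (induction j)
  case (Suc j)
  have "sqrt 2 \<ge> 1.4" by (rule real_le_rsqrt) (simp add: power2_eq_square)
  hence s: "sqrt 2 * 5 \<ge> 7" by simp
  have "fs (Suc j) + 7 = sqrt 2 * (fs j + 7) - (sqrt 2 * 5 - 7)" by (simp add: algebra_simps)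
  also have "\<dots> \<le> sqrt 2 * (fs j + 7)" using s by simp
  also have "\<dots> \<le> sqrt 2 * (8 * sqrt 2 ^ j)" using Suc by (intro mult_left_mono) auto
  finally show ?case by simp
qed simp

lemma fs_sq: "(fs j)\<^sup>2 \<le> 64 * 2 ^ j"
proof -
  have "fs j \<le> 8 * sqrt 2 ^ j" using fs_bound[of j] by linarith
  hence "(fs j)\<^sup>2 \<le> (8 * sqrt 2 ^ j)\<^sup>2" using fs_ge1[of j] by (intro power_mono) auto
  also have "\<dots> = 64 * (sqrt 2 ^ j)\<^sup>2" by (simp add: power_mult_distrib)
  also have "(sqrt 2 ^ j)\<^sup>2 = (sqrt 2 ^ 2) ^ j" by (simp only: power_mult[symmetric] mult.commute)
  also have "\<dots> = 2 ^ j" by simp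
  finally show ?thesis .
qed

lemma step_ineq:
  fixes a a' l f :: real
  assumes l: "l \<ge> 1" and f: "f \<ge> 1" and a: "a \<ge> l * (sqrt 2 * (f + 2))\<^sup>2"
    and a': "a' \<ge> (a - 1) / 2 - sqrt (2 * a * l)"
  shows "a' \<ge> l * f\<^sup>2"
proof -
  define s where "s = sqrt (2 * a * l)"
  have a0: "a \<ge> 0" using a l by (meson dual_order.trans mult_nonneg_nonneg zero_le_one zero_le_power2)
  have ss: "s\<^sup>2 = 2 * a * l" unfolding s_def using a0 l by simp
  have "(sqrt 2 * (f + 2))\<^sup>2 = 2 * (f+2)\<^sup>2" by (simp add: power_mult_distrib)
  hence "2 * a * l \<ge> 2 * l * (l * (2 * (f+2)\<^sup>2))" using a l by (simp add: mult_left_mono mult.assoc mult.left_commute)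
  moreover have "(2 * l * (f+2))\<^sup>2 = 2 * l * (l * (2 * (f+2)\<^sup>2))" by (simp add: power_mult_distrib power2_eq_square)
  ultimately have "s\<^sup>2 \<ge> (2 * l * (f+2))\<^sup>2" using ss by simp
  hence s1: "s \<ge> 2 * l * (f + 2)" unfolding s_def
    by (rule power2_le_imp_le) (use a0 l in simp)
  have "s - 4 * l \<ge> 2 * l * f" using s1 by (simp add: algebra_simps)
  have "s * (s - 4 * l) \<ge> (2 * l * (f + 2)) * (2 * l * f)"
    using s1 \<open>s - 4 * l \<ge> 2 * l * f\<close> l f by (intro mult_mono) (use a0 in \<open>auto simp: s_def\<close>)
  hence "s\<^sup>2 - 4 * l * s \<ge> 4 * l\<^sup>2 * f\<^sup>2 + 8 * l\<^sup>2 * f" by (simp add: power2_eq_square algebra_simps)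
  moreover have "8 * l\<^sup>2 * f \<ge> 2 * l"
  proof -
    have "l * f \<ge> 1 * 1" using l f by (intro mult_mono) auto
    hence "8 * l * (l * f) \<ge> 8 * l * 1" using l by (intro mult_left_mono) auto
    thus ?thesis using l by (simp add: power2_eq_square algebra_simps)
  qed
  ultimately have "2 * a * l - 4 * l * s - 2 * l \<ge> 4 * l\<^sup>2 * f\<^sup>2" using ss l by linarith
  hence "4 * l * ((a - 1) / 2 - s) \<ge> 4 * l * (l * f\<^sup>2)" by (simp add: algebra_simps power2_eq_square)
  hence "(a - 1) / 2 - s \<ge> l * f\<^sup>2" using l by simp
  thus ?thesis using a' s_def by linarith
qed


lemma ordered_count_sum:
  fixes R :: "nat \<Rightarrow> nat \<Rightarrow> bool"
  assumes "finite A"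
  shows "card {(v,u)\<in>A\<times>A. R v u} = (\<Sum>v\<in>A. card {u\<in>A. R v u})"
proof -
  have "{(v,u)\<in>A\<times>A. R v u} = (SIGMA v:A. {u\<in>A. R v u})" by auto
  thus ?thesis using assms by simp
qed

lemma exists_high_deg:
  fixes R :: "nat \<Rightarrow> nat \<Rightarrow> bool"
  assumes "finite A" "A \<noteq> {}"
  shows "\<exists>v\<in>A. real (card {u\<in>A. R v u}) * real (card A) \<ge> real (card {(v,u)\<in>A\<times>A. R v u})"
proof (rule ccontr)
  assume "\<not> ?thesis"
  hence lt: "\<And>v. v \<in> A \<Longrightarrow> real (card {u\<in>A. R v u}) * real (card A) < real (card {(v,u)\<in>A\<times>A. R v u})"
    by force
  have "(\<Sum>v\<in>A. real (card {u\<in>A. R v u}) * real (card A)) < (\<Sum>v\<in>A. real (card {(v,u)\<in>A\<times>A. R v u}))"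
    using assms lt by (intro sum_strict_mono) auto
  also have "\<dots> = real (card A) * real (card {(v,u)\<in>A\<times>A. R v u})" by simp
  also have "(\<Sum>v\<in>A. real (card {u\<in>A. R v u}) * real (card A)) = real (card A) * real (card {(v,u)\<in>A\<times>A. R v u})"
    using ordered_count_sum[OF assms(1), of R] by (simp add: sum_distrib_left mult.commute)
  finally show False by simp
qed

lemma greedy_clique:
  fixes R :: "nat \<Rightarrow> nat \<Rightarrow> bool" and V :: "nat set" and l :: real
  assumes finV: "finite V" and l: "l \<ge> 1" and sym: "\<And>u v. R u v \<Longrightarrow> R v u" and irr: "\<And>v. \<not> R v v"
    and dens: "\<And>A. A \<subseteq> V \<Longrightarrow> real (card {(u,v)\<in>A\<times>A. R u v}) \<ge>
        real (card A) * (real (card A) - 1) / 2 - real (card A) * sqrt (2 * real (card A) * l)"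
  shows "A \<subseteq> V \<Longrightarrow> real (card A) \<ge> l * (fs j)\<^sup>2 \<Longrightarrow> \<exists>K\<subseteq>A. is_clique R K \<and> card K \<ge> Suc j"
proof (induction j arbitrary: A)
  case 0
  hence "real (card A) \<ge> 1" using l by simp
  hence "A \<noteq> {}" by auto
  then obtain v where "v \<in> A" by auto
  thus ?case by (intro exI[of _ "{v}"]) (auto simp: is_clique_def)
next
  case (Suc j)
  have finA: "finite A" using Suc.prems finV finite_subset by blast
  have "l * (fs (Suc j))\<^sup>2 \<ge> 1 * 1"
  proof -
    have "fs (Suc j) \<ge> 1" by (rule fs_ge1)
    hence "(fs (Suc j))\<^sup>2 \<ge> 1" by (simp add: one_le_power)
    thus ?thesis using l by (intro mult_mono) auto
  qed
  hence k1: "real (card A) \<ge> 1" using Suc.prems by simp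
  hence Ane: "A \<noteq> {}" by auto
  obtain v where v: "v \<in> A" and dv: "real (card {u\<in>A. R v u}) * real (card A) \<ge> real (card {(v,u)\<in>A\<times>A. R v u})"
    using exists_high_deg[OF finA Ane, of R] by blast
  define A' where "A' = {u\<in>A. R v u}"
  define k where "k = real (card A)"
  have "real (card A') * k \<ge> k * ((k - 1) / 2 - sqrt (2 * k * l))"
  proof -
    have e: "k * ((k - 1) / 2 - sqrt (2*k*l)) = k*(k-1)/2 - k* sqrt(2*k*l)" by (simp add: right_diff_distrib)
    have "real (card {(u,v)\<in>A\<times>A. R u v}) \<ge> k*(k-1)/2 - k* sqrt(2*k*l)"
      using dens[OF Suc.prems(1)] unfolding k_def .
    thus ?thesis using dv e unfolding A'_def k_def[symmetric] by linarith
  qed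
  hence a': "real (card A') \<ge> (k - 1) / 2 - sqrt (2 * k * l)"
  proof -
    have kpos: "k > 0" using k1 unfolding k_def by simp
    have "k * ((k - 1) / 2 - sqrt (2 * k * l)) \<le> k * real (card A')"
      using \<open>real (card A') * k \<ge> k * ((k - 1) / 2 - sqrt (2 * k * l))\<close> mult.commute[of "real (card A')" k] by linarith
    thus ?thesis by (simp only: mult_le_cancel_left_pos[OF kpos])
  qed
  have "real (card A') \<ge> l * (fs j)\<^sup>2"
  proof (rule step_ineq[OF l fs_ge1 _ a'])
    have "fs (Suc j) = sqrt 2 * (fs j + 2)" by simp
    thus "l * (sqrt 2 * (fs j + 2))\<^sup>2 \<le> k" using Suc.prems(2) unfolding k_def by metis
  qed
  moreover have "A' \<subseteq> V" using Suc.prems unfolding A'_def by auto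
  ultimately obtain K' where K': "K' \<subseteq> A'" "is_clique R K'" "card K' \<ge> Suc j"
    using Suc.IH by blast
  have vK: "v \<notin> K'" using K'(1) irr unfolding A'_def by auto
  have "finite A'" unfolding A'_def using finA by simp
  hence finK: "finite K'" using K'(1) finite_subset by blast
  have Kv: "\<And>u. u \<in> K' \<Longrightarrow> R v u" using K'(1) unfolding A'_def by auto
  have Kc: "\<And>u w. u \<in> K' \<Longrightarrow> w \<in> K' \<Longrightarrow> u \<noteq> w \<Longrightarrow> R u w" using K'(2) unfolding is_clique_def by blast
  have "is_clique R (insert v K')"
    unfolding is_clique_def using Kv Kc sym by auto
  moreover have "card (insert v K') \<ge> Suc (Suc j)" using vK finK K'(3) by simp
  moreover have "insert v K' \<subseteq> A" using v K'(1) unfolding A'_def by auto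
  ultimately show ?case by blast
qed


lemma sum_pow_card:
  fixes x :: real
  assumes "finite V"
  shows "(\<Sum>A\<in>Pow V. x ^ card A) = (1 + x) ^ card V"
  using assms
proof (induction V rule: finite_induct)
  case empty
  then show ?case by simp
next
  case (insert a F)
  have inj: "inj_on (insert a) (Pow F)"
    using insert.hyps(2) unfolding inj_on_def by (metis PowD insert_ident subsetD)
  have disj: "Pow F \<inter> insert a ` Pow F = {}" using insert.hyps(2) by blast
  have "(\<Sum>A\<in>Pow (insert a F). x ^ card A) = (\<Sum>A\<in>Pow F. x ^ card A) + (\<Sum>A\<in>insert a ` Pow F. x ^ card A)"
    unfolding Pow_insert using insert.hyps(1) disj by (intro sum.union_disjoint) auto
  also have "(\<Sum>A\<in>insert a ` Pow F. x ^ card A) = (\<Sum>A\<in>Pow F. x ^ card (insert a A))"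
    using inj by (simp add: sum.reindex)
  also have "\<dots> = (\<Sum>A\<in>Pow F. x * x ^ card A)"
  proof (intro sum.cong refl)
    fix A assume "A \<in> Pow F"
    hence "finite A" "a \<notin> A" using insert.hyps finite_subset by auto
    thus "x ^ card (insert a A) = x * x ^ card A" by simp
  qed
  also have "(\<Sum>A\<in>Pow F. x * x ^ card A) = x * (\<Sum>A\<in>Pow F. x ^ card A)"
    by (rule sum_distrib_left[symmetric])
  also have "(\<Sum>A\<in>Pow F. x ^ card A) + x * (\<Sum>A\<in>Pow F. x ^ card A) = (1 + x) * (\<Sum>A\<in>Pow F. x ^ card A)"
    by (simp only: distrib_right mult_1)
  also have "\<dots> = (1 + x) * (1 + x) ^ card F" by (simp only: insert.IH)
  also have "\<dots> = (1 + x) ^ card (insert a F)" using insert.hyps by simp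
  finally show ?case .
qed

lemma bad_prob:
  fixes P Q :: "'a set" and \<delta> :: real
  assumes "finite P" "Q \<subseteq> P" "card Q > 0" "\<delta> \<ge> 0"
  shows "measure_pmf.prob (Pi_pmf P False (\<lambda>_. bernoulli_pmf (1/2)))
           {f. \<delta> \<le> \<bar>real (card {x\<in>Q. f x}) - real (card Q) / 2\<bar>} \<le> 2 * exp (-2 * \<delta>\<^sup>2 / real (card Q))"
proof -
  have finQ: "finite Q" using assms finite_subset by blast
  have "binomial_pmf (card Q) (1/2) = map_pmf (\<lambda>f. card {x\<in>Q. f x}) (Pi_pmf Q False (\<lambda>_. bernoulli_pmf (1/2)))"
    by (rule binomial_pmf_altdef') (use finQ in auto)
  also have "Pi_pmf Q False (\<lambda>_. bernoulli_pmf (1/2)) = map_pmf (\<lambda>f x. if x \<in> Q then f x else False) (Pi_pmf P False (\<lambda>_. bernoulli_pmf (1/2)))"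
    by (rule Pi_pmf_subset) (use assms in auto)
  also have "map_pmf (\<lambda>f. card {x\<in>Q. f x}) \<dots> = map_pmf (\<lambda>f. card {x\<in>Q. f x}) (Pi_pmf P False (\<lambda>_. bernoulli_pmf (1/2)))"
    unfolding map_pmf_comp by (intro map_pmf_cong refl) (metis (mono_tags, lifting))
  finally have eq: "binomial_pmf (card Q) (1/2) = map_pmf (\<lambda>f. card {x\<in>Q. f x}) (Pi_pmf P False (\<lambda>_. bernoulli_pmf (1/2)))" .
  have "measure_pmf.prob (Pi_pmf P False (\<lambda>_. bernoulli_pmf (1/2)))
           {f. \<delta> \<le> \<bar>real (card {x\<in>Q. f x}) - real (card Q) / 2\<bar>}
        = measure_pmf.prob (binomial_pmf (card Q) (1/2)) {k. \<delta> \<le> \<bar>real k - real (card Q) * (1/2)\<bar>}"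
    unfolding eq measure_map_pmf by (simp add: vimage_def)
  also have "\<dots> \<le> 2 * exp (-2 * \<delta>\<^sup>2 / real (card Q))"
    using binomial_distribution.prob_abs_ge[of "1/2" "card Q" \<delta>] assms
    by (simp add: binomial_distribution_def)
  finally show ?thesis .
qed

definition QA :: "nat set \<Rightarrow> (nat \<times> nat) set" where
  "QA A = {(i,j). i \<in> A \<and> j \<in> A \<and> i < j}"

definition cA :: "nat \<Rightarrow> nat set \<Rightarrow> real" where
  "cA n A = real (card A + 1) * ln (real n) + ln 2"

definition dA :: "nat \<Rightarrow> nat set \<Rightarrow> real" where
  "dA n A = sqrt (real (card (QA A)) * cA n A / 2)"

definition Bad :: "nat \<Rightarrow> nat set \<Rightarrow> (nat \<times> nat \<Rightarrow> bool) set" where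
  "Bad n A = {f. dA n A < \<bar>real (card {x\<in>QA A. f x}) - real (card (QA A)) / 2\<bar>}"

definition Pn :: "nat \<Rightarrow> (nat \<times> nat) set" where
  "Pn n = {(i,j). i < j \<and> j < n}"

lemma finite_Pn: "finite (Pn n)"
proof -
  have "Pn n \<subseteq> {..<n} \<times> {..<n}" unfolding Pn_def by auto
  thus ?thesis by (rule finite_subset) auto
qed

lemma QA_sub: "A \<subseteq> {0..<n} \<Longrightarrow> QA A \<subseteq> Pn n"
  unfolding QA_def Pn_def by auto

lemma exp_calc:
  assumes "n \<ge> (1::nat)"
  shows "2 * exp (- (real m * ln (real n) + ln 2)) = (1 / real n) ^ m"
proof -
  have e0: "exp (real m * ln (real n)) = real n ^ m"
    using assms by (simp add: exp_of_nat_mult)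
  have e1: "exp (real m * ln (real n) + ln 2) = 2 * real n ^ m"
    by (simp only: exp_add e0) simp
  have "exp (- (real m * ln (real n) + ln 2)) = inverse (2 * real n ^ m)"
    by (simp only: exp_minus e1)
  hence "2 * exp (- (real m * ln (real n) + ln 2)) = inverse (real n ^ m)"
    by simp
  thus ?thesis by (simp add: power_one_over inverse_eq_divide)
qed

lemma prob_Bad:
  assumes n: "n \<ge> 2" and A: "A \<subseteq> {0..<n}"
  shows "measure_pmf.prob (Pi_pmf (Pn n) False (\<lambda>_. bernoulli_pmf (1/2))) (Bad n A) \<le> (1 / real n) ^ (card A + 1)"
proof (cases "card (QA A) = 0")
  case True
  have "finite (QA A)" using QA_sub[OF A] finite_Pn finite_subset by blast
  hence "QA A = {}" using True by simp
  hence "Bad n A = {}" unfolding Bad_def dA_def by auto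
  thus ?thesis by simp
next
  case False
  have "ln (real n) \<ge> 0" using n by simp
  hence c0: "cA n A \<ge> 0" unfolding cA_def by (intro add_nonneg_nonneg mult_nonneg_nonneg) auto
  have d0: "dA n A \<ge> 0" unfolding dA_def using c0 by simp
  have "measure_pmf.prob (Pi_pmf (Pn n) False (\<lambda>_. bernoulli_pmf (1/2))) (Bad n A)
     \<le> measure_pmf.prob (Pi_pmf (Pn n) False (\<lambda>_. bernoulli_pmf (1/2)))
           {f. dA n A \<le> \<bar>real (card {x\<in>QA A. f x}) - real (card (QA A)) / 2\<bar>}"
    unfolding Bad_def by (intro measure_pmf.finite_measure_mono) auto
  also have "\<dots> \<le> 2 * exp (-2 * (dA n A)\<^sup>2 / real (card (QA A)))"
    by (rule bad_prob[OF finite_Pn QA_sub[OF A]]) (use False d0 in auto)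
  also have "-2 * (dA n A)\<^sup>2 / real (card (QA A)) = - cA n A"
    unfolding dA_def using c0 False by simp
  also have "2 * exp (- cA n A) = (1 / real n) ^ (card A + 1)"
    unfolding cA_def using exp_calc[of n "card A + 1"] n by simp
  finally show ?thesis .
qed



lemma exists_good:
  assumes n: "n \<ge> 4"
  shows "\<exists>f. \<forall>A \<subseteq> {0..<n}. f \<notin> Bad n A"
proof (rule ccontr)
  assume "\<not> ?thesis"
  hence all: "\<And>f. \<exists>A\<in>Pow {0..<n}. f \<in> Bad n A" by auto
  define M where "M = Pi_pmf (Pn n) False (\<lambda>_. bernoulli_pmf (1/2))"
  have U: "(\<Union>A\<in>Pow {0..<n}. Bad n A) = UNIV" using all by auto
  have "1 = measure_pmf.prob M (\<Union>A\<in>Pow {0..<n}. Bad n A)"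
    unfolding U by (simp add: measure_pmf.prob_space[of M, unfolded space_measure_pmf])
  also have "\<dots> \<le> (\<Sum>A\<in>Pow {0..<n}. measure_pmf.prob M (Bad n A))"
    by (intro measure_pmf.finite_measure_subadditive_finite) auto
  also have "\<dots> \<le> (\<Sum>A\<in>Pow {0..<n}. (1 / real n) ^ (card A + 1))"
    unfolding M_def using n by (intro sum_mono prob_Bad) auto
  also have "\<dots> = (1 / real n) * (\<Sum>A\<in>Pow {0..<n}. (1 / real n) ^ card A)"
    by (simp add: sum_distrib_left)
  also have "(\<Sum>A\<in>Pow {0..<n}. (1 / real n) ^ card A) = (1 + 1 / real n) ^ n"
    using sum_pow_card[of "{0..<n}" "1 / real n"] by simp
  also have "(1 / real n) * (1 + 1 / real n) ^ n \<le> (1 / real n) * exp 1"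
  proof (rule mult_left_mono)
    have "(1 + 1 / real n) ^ n \<le> exp (1 / real n) ^ n"
      by (intro power_mono) (auto simp: exp_ge_add_one_self add_nonneg_nonneg)
    also have "exp (1 / real n) ^ n = exp 1"
      using n by (simp add: exp_of_nat_mult[symmetric])
    finally show "(1 + 1 / real n) ^ n \<le> exp 1" .
  qed simp
  also have "(1 / real n) * exp 1 \<le> (1 / real n) * 3"
    by (rule mult_left_mono[OF exp_le]) simp
  also have "\<dots> < 1" using n by simp
  finally show False by simp
qed

definition Eg :: "(nat \<times> nat \<Rightarrow> bool) \<Rightarrow> nat \<Rightarrow> nat \<Rightarrow> bool" where
  "Eg f u v \<longleftrightarrow> u \<noteq> v \<and> f (min u v, max u v)"

definition Ec :: "(nat \<times> nat \<Rightarrow> bool) \<Rightarrow> nat \<Rightarrow> nat \<Rightarrow> bool" where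
  "Ec f u v \<longleftrightarrow> u \<noteq> v \<and> \<not> f (min u v, max u v)"

lemma sym_count:
  fixes R :: "nat \<Rightarrow> nat \<Rightarrow> bool"
  assumes "finite A" and sym: "\<And>u v. R u v \<Longrightarrow> R v u" and irr: "\<And>v. \<not> R v v"
  shows "card {(u,v)\<in>A\<times>A. R u v} = 2 * card {(u,v)\<in>A\<times>A. u < v \<and> R u v}"
proof -
  define L where "L = {(u,v)\<in>A\<times>A. u < v \<and> R u v}"
  have "L \<subseteq> A \<times> A" unfolding L_def by auto
  hence finL: "finite L" using finite_cartesian_product[OF assms(1) assms(1)] finite_subset by blast
  have eq: "{(u,v)\<in>A\<times>A. R u v} = L \<union> prod.swap ` L"
  proof (intro equalityI subsetI)
    fix x assume "x \<in> {(u,v)\<in>A\<times>A. R u v}"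
    then obtain u v where x: "x = (u,v)" "u \<in> A" "v \<in> A" "R u v" by auto
    have "u \<noteq> v" using x irr by auto
    show "x \<in> L \<union> prod.swap ` L"
    proof (cases "u < v")
      case True thus ?thesis using x unfolding L_def by auto
    next
      case False
      hence "v < u" using \<open>u \<noteq> v\<close> by simp
      hence "(v,u) \<in> L" using x sym unfolding L_def by auto
      thus ?thesis using x by (auto intro: image_eqI[of _ _ "(v,u)"])
    qed
  next
    fix x assume "x \<in> L \<union> prod.swap ` L"
    thus "x \<in> {(u,v)\<in>A\<times>A. R u v}" unfolding L_def using sym by auto
  qed
  have disj: "L \<inter> prod.swap ` L = {}" unfolding L_def by auto
  have "card (L \<union> prod.swap ` L) = card L + card (prod.swap ` L)"
    using finL disj by (intro card_Un_disjoint) auto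
  also have "card (prod.swap ` L) = card L" by (rule card_image) simp
  finally show ?thesis unfolding eq L_def by simp
qed

lemma card_QA:
  assumes "finite A"
  shows "2 * card (QA A) = card A * (card A - 1)"
proof -
  have "card {(u,v)\<in>A\<times>A. u \<noteq> v} = 2 * card {(u,v)\<in>A\<times>A. u < v \<and> u \<noteq> v}"
    by (rule sym_count[OF assms]) auto
  also have "{(u,v)\<in>A\<times>A. u < v \<and> u \<noteq> v} = QA A" unfolding QA_def by auto
  finally have 1: "card {(u,v)\<in>A\<times>A. u \<noteq> v} = 2 * card (QA A)" .
  have "card {(u,v)\<in>A\<times>A. u \<noteq> v} = (\<Sum>u\<in>A. card {v\<in>A. u \<noteq> v})"
    by (rule ordered_count_sum[OF assms])
  also have "\<dots> = (\<Sum>u\<in>A. card A - 1)"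
  proof (intro sum.cong refl)
    fix u assume "u \<in> A"
    have "{v\<in>A. u \<noteq> v} = A - {u}" by auto
    thus "card {v\<in>A. u \<noteq> v} = card A - 1" using \<open>u \<in> A\<close> assms by simp
  qed
  also have "\<dots> = card A * (card A - 1)" by simp
  finally show ?thesis using 1 by simp
qed



lemma log_facts:
  assumes n: "n \<ge> (2::nat)"
  shows "log 2 (real n) \<ge> 1" "ln (real n) \<le> log 2 (real n)" "ln 2 \<le> log 2 (real n)"
proof -
  have "log 2 (real 2) \<le> log 2 (real n)" using n by simp
  thus l1: "log 2 (real n) \<ge> 1" by simp
  have ln0: "ln (real n) \<ge> 0" using n by simp
  have l2: "0 < ln (2::real)" "ln (2::real) < 1" using ln_2_less_1 by auto
  have "ln (real n) * ln 2 \<le> ln (real n)" by (rule mult_left_le) (use l2 ln0 in auto)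
  hence "ln (real n) * 1 \<le> ln (real n) / ln 2 * 1"
    using l2 by (simp add: le_divide_eq)
  thus "ln (real n) \<le> log 2 (real n)" by (simp add: log_def)
  show "ln 2 \<le> log 2 (real n)" using l1 l2 by linarith
qed

lemma key_ineq:
  fixes k N c l ln_n :: real
  assumes k: "k \<ge> 0" and N: "2 * N = k * (k - 1)" and N0: "N \<ge> 0"
    and c: "c = (k + 1) * ln_n + ln 2" and lnn: "0 \<le> ln_n" "ln_n \<le> l" and l2: "ln 2 \<le> l"
  shows "2 * sqrt (N * c / 2) \<le> k * sqrt (2 * k * l)"
proof -
  have c0: "c \<ge> 0" using c lnn k by (simp add: add_nonneg_nonneg)
  have l0: "l \<ge> 0" using lnn by simp
  have "c \<le> (k + 2) * l"
  proof -
    have "(k + 1) * ln_n \<le> (k + 1) * l" using lnn k by (intro mult_left_mono) auto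
    thus ?thesis using c l2 by (simp add: algebra_simps)
  qed
  hence "k * (k - 1) * c \<le> k * (k - 1) * ((k + 2) * l)"
    using N N0 by (intro mult_left_mono) auto
  also have "\<dots> = (k * (k - 1) * (k + 2)) * l" by simp
  also have "\<dots> \<le> (2 * k ^ 3) * l"
  proof (rule mult_right_mono[OF _ l0])
    have "k * (k\<^sup>2 - k + 2) \<ge> 0"
    proof -
      have "k\<^sup>2 - k + 2 = (k - 1/2)\<^sup>2 + 7/4" by (simp add: power2_eq_square algebra_simps)
      hence "k\<^sup>2 - k + 2 \<ge> 0" by (metis add_nonneg_nonneg zero_le_power2 zero_le_divide_iff zero_le_numeral)
      thus ?thesis using k by simp
    qed
    thus "k * (k - 1) * (k + 2) \<le> 2 * k ^ 3" by (simp add: power2_eq_square power3_eq_cube algebra_simps)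
  qed
  finally have A: "k * (k - 1) * c \<le> 2 * k ^ 3 * l" .
  have "(2 * sqrt (N * c / 2))\<^sup>2 = 4 * (N * c / 2)"
    using N0 c0 by (simp add: power_mult_distrib)
  also have "\<dots> = (2 * N) * c" by simp
  also have "\<dots> = k * (k - 1) * c" using N by simp
  also have "\<dots> \<le> 2 * k ^ 3 * l" by (rule A)
  also have "2 * k ^ 3 * l = (k * sqrt (2 * k * l))\<^sup>2"
    using k l0 by (simp add: power_mult_distrib power2_eq_square power3_eq_cube)
  finally show ?thesis
    by (rule power2_le_imp_le) (use k l0 in simp)
qed

lemma finite_QA: "finite A \<Longrightarrow> finite (QA A)"
proof -
  assume "finite A"
  moreover have "QA A \<subseteq> A \<times> A" unfolding QA_def by auto
  ultimately show ?thesis using finite_subset by blast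
qed

lemma Eg_sym: "Eg f u v \<Longrightarrow> Eg f v u" unfolding Eg_def by (auto simp: min.commute max.commute)
lemma Ec_sym: "Ec f u v \<Longrightarrow> Ec f v u" unfolding Ec_def by (auto simp: min.commute max.commute)
lemma Eg_irr: "\<not> Eg f v v" unfolding Eg_def by simp
lemma Ec_irr: "\<not> Ec f v v" unfolding Ec_def by simp

lemma good_density:
  assumes n: "n \<ge> 2" and good: "\<forall>A \<subseteq> {0..<n}. f \<notin> Bad n A" and R: "R = Eg f \<or> R = Ec f"
    and A: "A \<subseteq> {0..<n}"
  shows "real (card {(u,v)\<in>A\<times>A. R u v}) \<ge>
        real (card A) * (real (card A) - 1) / 2 - real (card A) * sqrt (2 * real (card A) * log 2 (real n))"
proof -
  have finA: "finite A" using A finite_subset by blast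
  define k where "k = card A"
  define N where "N = card (QA A)"
  define U where "U = card {x\<in>QA A. f x}"
  define \<delta> where "\<delta> = dA n A"
  have finQ: "finite (QA A)" by (rule finite_QA[OF finA])
  have UN: "U \<le> N" unfolding U_def N_def using finQ by (intro card_mono) auto
  have hN: "2 * real N = real k * (real k - 1)"
  proof -
    have "2 * N = k * (k - 1)" unfolding N_def k_def by (rule card_QA[OF finA])
    hence "real (2 * N) = real (k * (k - 1))" by simp
    thus ?thesis by (cases k) (simp_all add: algebra_simps)
  qed
  have dev: "\<bar>real U - real N / 2\<bar> \<le> \<delta>"
    using good A unfolding Bad_def U_def N_def \<delta>_def by auto
  have O: "real (card {(u,v)\<in>A\<times>A. R u v}) \<ge> real N - 2 * \<delta>"
    using R
  proof
    assume R: "R = Eg f"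
    have "card {(u,v)\<in>A\<times>A. R u v} = 2 * card {(u,v)\<in>A\<times>A. u < v \<and> R u v}"
      using sym_count[OF finA, of R] R Eg_sym Eg_irr by blast
    also have "{(u,v)\<in>A\<times>A. u < v \<and> R u v} = {x\<in>QA A. f x}"
      unfolding R QA_def Eg_def by auto
    finally have "card {(u,v)\<in>A\<times>A. R u v} = 2 * U" unfolding U_def .
    thus ?thesis using dev by simp
  next
    assume R: "R = Ec f"
    have "card {(u,v)\<in>A\<times>A. R u v} = 2 * card {(u,v)\<in>A\<times>A. u < v \<and> R u v}"
      using sym_count[OF finA, of R] R Ec_sym Ec_irr by blast
    also have "{(u,v)\<in>A\<times>A. u < v \<and> R u v} = QA A - {x\<in>QA A. f x}"
      unfolding R QA_def Ec_def by auto
    also have "card (QA A - {x\<in>QA A. f x}) = N - U"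
      unfolding N_def U_def using finQ by (intro card_Diff_subset) auto
    finally have "card {(u,v)\<in>A\<times>A. R u v} = 2 * (N - U)" .
    hence "real (card {(u,v)\<in>A\<times>A. R u v}) = 2 * (real N - real U)" using UN by simp
    thus ?thesis using dev by simp
  qed
  have key: "2 * \<delta> \<le> real k * sqrt (2 * real k * log 2 (real n))"
    unfolding \<delta>_def dA_def cA_def N_def[symmetric] k_def[symmetric]
    by (rule key_ineq[of "real k" "real N" "real (k+1) * ln (real n) + ln 2" "ln (real n)" "log 2 (real n)", OF _ hN])
       (use log_facts[OF n] n in auto)
  show ?thesis using O key hN unfolding k_def by linarith
qed



lemma clique_Ec_indep:
  assumes "is_clique (Ec f) K"
  shows "is_indep (Eg f) K"
  using assms unfolding is_clique_def is_indep_def Ec_def Eg_def by blast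

theorem proposition2p1:
  fixes n :: nat
  assumes "n \<ge> 1"
  shows "\<exists>E :: nat \<Rightarrow> nat \<Rightarrow> bool. simple_graph {0..<n} E \<and>
           (\<forall>r::real. r > 0 \<and> 2 powr (r + 8) * log 2 (real n) > 0 \<longrightarrow>
              locally_ramsey {0..<n} E (2 powr (r + 8) * log 2 (real n)) r)"
proof (cases "n \<ge> 4")
  case False
  show ?thesis
  proof (intro exI[of _ "\<lambda>_ _. False"] conjI allI impI)
    show "simple_graph {0..<n} (\<lambda>_ _. False)" unfolding simple_graph_def by simp
    fix r :: real assume h: "r > 0 \<and> 2 powr (r + 8) * log 2 (real n) > 0"
    have "log 2 (real n) > 0" using h by (simp add: zero_less_mult_iff)
    hence "n \<ge> 2" using assms by (cases "n = 1") auto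
    hence l1: "log 2 (real n) \<ge> 1" using log_facts by blast
    have "2 powr (r + 8) \<ge> 2 powr 8" using h by (intro powr_mono) auto
    hence "2 powr (r + 8) \<ge> 256" by simp
    hence m: "2 powr (r + 8) * log 2 (real n) \<ge> 256 * 1"
      using l1 by (intro mult_mono) auto
    show "locally_ramsey {0..<n} (\<lambda>_ _. False) (2 powr (r + 8) * log 2 (real n)) r"
      unfolding locally_ramsey_def
    proof (intro allI impI)
      fix S assume "S \<subseteq> {0..<n}" and c: "real (card S) \<ge> 2 powr (r + 8) * log 2 (real n)"
      have "card S \<le> n" using card_mono[OF _ \<open>S \<subseteq> {0..<n}\<close>] by simp
      hence "real (card S) < 256" using False by simp
      thus "(\<exists>K\<subseteq>S. is_clique (\<lambda>_ _. False) K \<and> r \<le> real (card K)) \<and>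
            (\<exists>I\<subseteq>S. is_indep (\<lambda>_ _. False) I \<and> r \<le> real (card I))" using c m by linarith
    qed
  qed
next
  case True
  hence n2: "n \<ge> 2" by simp
  define l where "l = log 2 (real n)"
  have l1: "l \<ge> 1" unfolding l_def using log_facts[OF n2] by blast
  obtain f where good: "\<forall>A \<subseteq> {0..<n}. f \<notin> Bad n A" using exists_good[OF True] by blast
  have finV: "finite {0..<n}" by simp
  have clq: "\<And>R A j. R = Eg f \<or> R = Ec f \<Longrightarrow> A \<subseteq> {0..<n} \<Longrightarrow> real (card A) \<ge> l * (fs j)\<^sup>2 \<Longrightarrow>
      \<exists>K\<subseteq>A. is_clique R K \<and> card K \<ge> Suc j"
  proof -
    fix R A j assume R: "R = Eg f \<or> R = Ec f" and A: "A \<subseteq> {0..<n}" and c: "real (card A) \<ge> l * (fs j)\<^sup>2"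
    have sym: "\<And>u v. R u v \<Longrightarrow> R v u" using R Eg_sym Ec_sym by blast
    have irr: "\<And>v. \<not> R v v" using R Eg_irr Ec_irr by blast
    have dens: "\<And>A. A \<subseteq> {0..<n} \<Longrightarrow> real (card {(u,v)\<in>A\<times>A. R u v}) \<ge>
        real (card A) * (real (card A) - 1) / 2 - real (card A) * sqrt (2 * real (card A) * l)"
      using good_density[OF n2 good R] unfolding l_def by blast
    show "\<exists>K\<subseteq>A. is_clique R K \<and> card K \<ge> Suc j"
      using greedy_clique[of "{0..<n}" l R, OF finV l1 sym irr dens A c] .
  qed
  show ?thesis
  proof (intro exI[of _ "Eg f"] conjI allI impI)
    show "simple_graph {0..<n} (Eg f)" unfolding simple_graph_def using Eg_sym Eg_irr by blast
    fix r :: real assume h: "r > 0 \<and> 2 powr (r + 8) * log 2 (real n) > 0"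
    define t where "t = nat \<lceil>r\<rceil>"
    have t1: "t \<ge> 1" using h unfolding t_def by linarith
    have rt: "r \<le> real t" unfolding t_def by linarith
    have "real t = real_of_int \<lceil>r\<rceil>" unfolding t_def using h by simp
    hence tr: "real t - 1 < r" using ceiling_correct[of r] by linarith
    define j where "j = t - 1"
    have tj: "t = Suc j" using t1 unfolding j_def by simp
    have "l * (fs j)\<^sup>2 \<le> l * (64 * 2 ^ j)" using l1 fs_sq[of j] by (intro mult_left_mono) auto
    also have "64 * 2 ^ j = (2::real) powr (real j + 6)"
      by (simp add: powr_add powr_realpow)
    also have "(2::real) powr (real j + 6) \<le> 2 powr (r + 8)"
      using tr tj by (intro powr_mono) auto
    finally have bnd: "l * (fs j)\<^sup>2 \<le> 2 powr (r + 8) * l" using l1 by (simp add: mult.commute)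
    show "locally_ramsey {0..<n} (Eg f) (2 powr (r + 8) * log 2 (real n)) r"
      unfolding locally_ramsey_def
    proof (intro allI impI conjI)
      fix S assume S: "S \<subseteq> {0..<n}" and c: "real (card S) \<ge> 2 powr (r + 8) * log 2 (real n)"
      have cS: "real (card S) \<ge> l * (fs j)\<^sup>2" using c bnd unfolding l_def by linarith
      obtain K where K: "K \<subseteq> S" "is_clique (Eg f) K" "card K \<ge> Suc j"
        using clq[of "Eg f", OF _ S cS] by blast
      have "r \<le> real (card K)" using K(3) rt tj by linarith
      thus "\<exists>K\<subseteq>S. is_clique (Eg f) K \<and> r \<le> real (card K)" using K by blast
      obtain I where I: "I \<subseteq> S" "is_clique (Ec f) I" "card I \<ge> Suc j"
        using clq[of "Ec f", OF _ S cS] by blast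
      have "r \<le> real (card I)" using I(3) rt tj by linarith
      thus "\<exists>I\<subseteq>S. is_indep (Eg f) I \<and> r \<le> real (card I)" using I clique_Ec_indep by blast
    qed
  qed
qed


end
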